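(* Under the standing assumptions, let $i,j\in I$ with $i\ne j$ and $d_X(e_i,e)\ge d_X(e_j,e)$. Then every path in $X$ from a point of $X_i$ to a point of $X_j$ meets $B(e_i;4M)$.
   Context: Standing assumptions: $X$ is a geodesic metric space with the RBP with respect to pieces $\{X_i:i\in I\}$ and constant $M>0$. Here $B(x;r)=\{z:d(x,z)<r\}$, $N_r(A)=\{z:d(z,A)\le r\}$, and RBP means: $X=\bigcup_i X_i$ and for all $i\neq j$ there is a fixed finite ordered set $I_{i,j}=\{i=i_0,i_1,\dots,i_s=j\}\subseteq I$ and points $w_r\in X_{i_r}\cap X_{i_{r+1}}$ ($0\le r<s$), forming the set $W_{i,j}$, such that every path in $X$ from $X_i$ to $X_j$ meets each $B(w_r;M)$. Moreover: a point $e\in X$ lies in exactly one piece, indexed $e\in I$ (so $X_e$); with $b=15M$, for every open ball $B$ and every $i$ with $\operatorname{diam}(B\cap X_i)\le 2b$, $X_i\setminus B$ is path-connected. For $i\ne e$, $e_i\in X_i$ is the point $w_0\in W_{i,e}$ (so every path from $X_i$ to $X_e$ meets $B(e_i;M)$); $e_e:=e$. *)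

theory Defs
  imports "HOL-Analysis.Analysis"
begin

definition geodesic_space :: "'a::metric_space set \<Rightarrow> bool" where
  "geodesic_space S \<longleftrightarrow>
     (\<forall>x\<in>S. \<forall>y\<in>S. \<exists>g::real \<Rightarrow> 'a.
        g 0 = x \<and> g (dist x y) = y \<and> g ` {0..dist x y} \<subseteq> S \<and>
        (\<forall>s\<in>{0..dist x y}. \<forall>t\<in>{0..dist x y}. dist (g s) (g t) = \<bar>s - t\<bar>))"

text \<open>RBP of the whole space (the universe of type 'a) with respect to pieces
X i (i in I) and constant M, with the fixed data: L i j is the ordered set
I_{i,j} = [i_0, ..., i_s] and W i j = [w_0, ..., w_{s-1}].\<close>
definition RBP :: "'i set \<Rightarrow> ('i \<Rightarrow> 'a::metric_space set) \<Rightarrow> real \<Rightarrow>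
    ('i \<Rightarrow> 'i \<Rightarrow> 'i list) \<Rightarrow> ('i \<Rightarrow> 'i \<Rightarrow> 'a list) \<Rightarrow> bool" where
  "RBP I X M L W \<longleftrightarrow> 0 < M \<and> (\<Union>i\<in>I. X i) = UNIV \<and>
     (\<forall>i\<in>I. \<forall>j\<in>I. i \<noteq> j \<longrightarrow>
        distinct (L i j) \<and> set (L i j) \<subseteq> I \<and> length (L i j) \<ge> 2 \<and>
        hd (L i j) = i \<and> last (L i j) = j \<and>
        length (W i j) = length (L i j) - 1 \<and>
        (\<forall>r < length (W i j). W i j ! r \<in> X (L i j ! r) \<inter> X (L i j ! Suc r)) \<and>
        (\<forall>g. path g \<and> g 0 \<in> X i \<and> g 1 \<in> X j \<longrightarrow>
           (\<forall>r < length (W i j). \<exists>t\<in>{0..1}. g t \<in> ball (W i j ! r) M)))"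

definition epoint :: "('i \<Rightarrow> 'i \<Rightarrow> 'a list) \<Rightarrow> 'i \<Rightarrow> 'a \<Rightarrow> 'i \<Rightarrow> 'a" where
  "epoint W ie e i = (if i = ie then e else hd (W i ie))"

end

theory Submission
  imports Defs
begin

lemma diam_le_metric:
  fixes S :: "'a::metric_space set"
  assumes "0 \<le> d" "\<And>x y. x \<in> S \<Longrightarrow> y \<in> S \<Longrightarrow> dist x y \<le> d"
  shows "diameter S \<le> d"
  using assms unfolding diameter_def by (auto intro!: cSUP_least)

lemma geo_path:
  fixes x y :: "'a::metric_space"
  assumes geo: "geodesic_space (UNIV :: 'a set)"
  shows "\<exists>\<gamma>. path \<gamma> \<and> pathstart \<gamma> = x \<and> pathfinish \<gamma> = y \<and>
     (\<forall>t\<in>{0..1}. dist x (\<gamma> t) = t * dist x y \<and> dist (\<gamma> t) y = (1 - t) * dist x y)"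
proof -
  define D where "D = dist x y"
  obtain g :: "real \<Rightarrow> 'a" where g0: "g 0 = x" and gD: "g D = y"
    and iso: "\<forall>s\<in>{0..D}. \<forall>t\<in>{0..D}. dist (g s) (g t) = \<bar>s - t\<bar>"
    using geo unfolding geodesic_space_def D_def by blast
  have D0: "0 \<le> D" unfolding D_def by simp
  define \<gamma> where "\<gamma> t = g (D * t)" for t
  have mem: "D * t \<in> {0..D}" if "t \<in> {0..1}" for t
    using that D0 by (auto intro: mult_left_le)
  have dg: "dist (\<gamma> s) (\<gamma> t) = D * \<bar>s - t\<bar>" if "s \<in> {0..1}" "t \<in> {0..1}" for s t
  proof -
    have "dist (\<gamma> s) (\<gamma> t) = \<bar>D * s - D * t\<bar>"
      unfolding \<gamma>_def using iso mem[OF that(1)] mem[OF that(2)] by blast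
    also have "\<dots> = D * \<bar>s - t\<bar>" using D0
      by (simp add: abs_mult right_diff_distrib[symmetric])
    finally show ?thesis .
  qed
  have "continuous_on {0..1} \<gamma>"
    unfolding continuous_on_iff
  proof (intro ballI allI impI)
    fix t :: real and \<epsilon> :: real assume t: "t \<in> {0..1}" and e: "0 < \<epsilon>"
    show "\<exists>d>0. \<forall>x'\<in>{0..1}. dist x' t < d \<longrightarrow> dist (\<gamma> x') (\<gamma> t) < \<epsilon>"
    proof (intro exI[of _ "\<epsilon> / (D + 1)"] conjI ballI impI)
      show "0 < \<epsilon> / (D + 1)" using e D0 by simp
      fix s assume s: "s \<in> {0..1}" and "dist s t < \<epsilon> / (D + 1)"
      then have st: "\<bar>s - t\<bar> * (D + 1) < \<epsilon>" using D0 by (simp add: dist_real_def field_simps)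
      have "dist (\<gamma> s) (\<gamma> t) = D * \<bar>s - t\<bar>" using dg s t by blast
      also have "\<dots> \<le> \<bar>s - t\<bar> * (D + 1)" by (simp add: algebra_simps)
      finally show "dist (\<gamma> s) (\<gamma> t) < \<epsilon>" using st by linarith
    qed
  qed
  then have "path \<gamma>" unfolding path_def .
  moreover have "pathstart \<gamma> = x" "pathfinish \<gamma> = y"
    unfolding pathstart_def pathfinish_def \<gamma>_def using g0 gD by auto
  moreover have "\<forall>t\<in>{0..1}. dist x (\<gamma> t) = t * D \<and> dist (\<gamma> t) y = (1 - t) * D"
  proof
    fix t :: real assume t: "t \<in> {0..1}"
    have "\<gamma> 0 = x" "\<gamma> 1 = y" unfolding \<gamma>_def using g0 gD by auto
    then show "dist x (\<gamma> t) = t * D \<and> dist (\<gamma> t) y = (1 - t) * D"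
      using dg[of 0 t] dg[of t 1] t by (auto simp: algebra_simps)
  qed
  ultimately show ?thesis unfolding D_def by blast
qed

lemma path_meets_iff:
  "(\<exists>t\<in>{0..1}. g t \<in> B) \<longleftrightarrow> path_image g \<inter> B \<noteq> {}"
  unfolding path_image_def by auto

theorem lemma3p2:
  fixes I :: "'i set" and X :: "'i \<Rightarrow> 'a::metric_space set" and M :: real
    and L :: "'i \<Rightarrow> 'i \<Rightarrow> 'i list" and W :: "'i \<Rightarrow> 'i \<Rightarrow> 'a list"
    and e :: 'a and ie :: 'i and i j :: 'i
  assumes geo: "geodesic_space (UNIV :: 'a set)"
    and rbp: "RBP I X M L W"
    and ie: "ie \<in> I" "e \<in> X ie" "\<forall>k\<in>I. e \<in> X k \<longrightarrow> k = ie"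
    and pc: "\<forall>x r k. 0 < r \<and> k \<in> I \<and> diameter (ball x r \<inter> X k) \<le> 2 * (15 * M)
               \<longrightarrow> path_connected (X k - ball x r)"
    and ij: "i \<in> I" "j \<in> I" "i \<noteq> j"
    and d: "dist (epoint W ie e i) e \<ge> dist (epoint W ie e j) e"
  shows "\<forall>g. path g \<and> g 0 \<in> X i \<and> g 1 \<in> X j \<longrightarrow>
           (\<exists>t\<in>{0..1}. g t \<in> ball (epoint W ie e i) (4 * M))"
proof -
  have M0: "0 < M" using rbp unfolding RBP_def by simp
  have Rall: "\<forall>a\<in>I. \<forall>b\<in>I. a \<noteq> b \<longrightarrow>
        distinct (L a b) \<and> set (L a b) \<subseteq> I \<and> length (L a b) \<ge> 2 \<and>
        hd (L a b) = a \<and> last (L a b) = b \<and>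
        length (W a b) = length (L a b) - 1 \<and>
        (\<forall>r < length (W a b). W a b ! r \<in> X (L a b ! r) \<inter> X (L a b ! Suc r)) \<and>
        (\<forall>g. path g \<and> g 0 \<in> X a \<and> g 1 \<in> X b \<longrightarrow>
           (\<forall>r < length (W a b). \<exists>t\<in>{0..1}. g t \<in> ball (W a b ! r) M))"
    using conjunct2[OF conjunct2[OF rbp[unfolded RBP_def]]] .
  note R = Rall[rule_format]
  have ek: "epoint W ie e k \<in> X k \<and>
      (\<forall>g. path g \<and> g 0 \<in> X k \<and> g 1 \<in> X ie \<longrightarrow>
           (\<exists>t\<in>{0..1}. g t \<in> ball (epoint W ie e k) M))"
    if k: "k \<in> I" "k \<noteq> ie" for k
  proof -
    note Rk = R[OF k(1) ie(1) k(2)]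
    have len: "0 < length (W k ie)" using Rk by auto
    have hdW: "hd (W k ie) = W k ie ! 0" using len by (simp add: hd_conv_nth)
    have hdL: "L k ie ! 0 = k" using Rk by (metis hd_conv_nth list.size(3) not_numeral_le_zero)
    have "W k ie ! 0 \<in> X (L k ie ! 0)" using Rk len by blast
    then have m: "epoint W ie e k \<in> X k" using hdW hdL k(2) unfolding epoint_def by simp
    have ep: "epoint W ie e k = W k ie ! 0" using hdW k(2) unfolding epoint_def by simp
    have all: "\<forall>g. path g \<and> g 0 \<in> X k \<and> g 1 \<in> X ie \<longrightarrow>
           (\<forall>r < length (W k ie). \<exists>t\<in>{0..1}. g t \<in> ball (W k ie ! r) M)"
      using Rk by blast
    show ?thesis
    proof (intro conjI m allI impI)
      fix g assume "path g \<and> g 0 \<in> X k \<and> g 1 \<in> X ie"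
      with all have "\<forall>r < length (W k ie). \<exists>t\<in>{0..1}. g t \<in> ball (W k ie ! r) M" by blast
      with len show "\<exists>t\<in>{0..1}. g t \<in> ball (epoint W ie e k) M" unfolding ep by blast
    qed
  qed
  have eX: "epoint W ie e k \<in> X k" if "k \<in> I" for k
    using ek[OF that] ie(2) by (cases "k = ie") (auto simp: epoint_def)
  show ?thesis
  proof (intro allI impI)
    fix g :: "real \<Rightarrow> 'a" assume g: "path g \<and> g 0 \<in> X i \<and> g 1 \<in> X j"
    define ei where "ei = epoint W ie e i"
    define ej where "ej = epoint W ie e j"
    have ij': "i \<noteq> ie"
    proof
      assume "i = ie"
      then have "ei = e" unfolding ei_def epoint_def by simp
      with d have "ej = e" unfolding ei_def[symmetric] ej_def[symmetric] by simp
      with eX[OF ij(2)] have "e \<in> X j" unfolding ej_def by simp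
      with ie(3) ij(2) have "j = ie" by blast
      with \<open>i = ie\<close> ij(3) show False by simp
    qed
    note eki = ek[OF ij(1) ij', folded ei_def]
    have eiX: "ei \<in> X i" using eki by simp
    have ejX: "ej \<in> X j" using eX[OF ij(2)] unfolding ej_def .
    have "\<exists>t\<in>{0..1}. g t \<in> ball ei (4 * M)"
    proof (cases "dist ei ej < 2 * M")
      case True
      obtain \<gamma> where \<gamma>: "path \<gamma>" "pathstart \<gamma> = ei" "pathfinish \<gamma> = ej"
        "\<forall>t\<in>{0..1}. dist ei (\<gamma> t) = t * dist ei ej \<and> dist (\<gamma> t) ej = (1 - t) * dist ei ej"
        using geo_path[OF geo] by blast
      note Rij = R[OF ij]
      have len: "0 < length (W i j)" using Rij by auto
      obtain s where s: "s \<in> {0..1}" "\<gamma> s \<in> ball (W i j ! 0) M"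
        using Rij len \<gamma>(1-3) eiX ejX unfolding pathstart_def pathfinish_def by blast
      obtain t where t: "t \<in> {0..1}" "g t \<in> ball (W i j ! 0) M"
        using Rij len g by blast
      have "dist ei (\<gamma> s) \<le> dist ei ej"
        using \<gamma>(4) s(1) by (auto intro: mult_left_le_one_le)
      then have "dist (g t) ei < 4 * M"
        using s(2) t(2) True dist_triangle[of "g t" ei "W i j ! 0"]
          dist_triangle[of "W i j ! 0" ei "\<gamma> s"]
        by (simp add: dist_commute)
      then show ?thesis using t(1) by (auto simp: dist_commute)
    next
      case False
      show ?thesis
      proof (rule ccontr)
        assume avoid: "\<not> (\<exists>t\<in>{0..1}. g t \<in> ball ei (4 * M))"
        have diam: "diameter (ball ei (2 * M) \<inter> X j) \<le> 2 * (15 * M)"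
          by (rule diam_le_metric) (use M0 in \<open>auto simp: dist_commute intro: order.trans[OF dist_triangle[of _ _ ei]]\<close>)
        have pcj: "path_connected (X j - ball ei (2 * M))"
          using pc ij(2) M0 diam by auto
        have "\<not> g 1 \<in> ball ei (4 * M)" using avoid by auto
        then have g1: "g 1 \<in> X j - ball ei (2 * M)" using g M0 by auto
        have ejo: "ej \<in> X j - ball ei (2 * M)" using ejX False by auto
        obtain h where h: "path h" "path_image h \<subseteq> X j - ball ei (2 * M)"
          "pathstart h = g 1" "pathfinish h = ej"
          using pcj g1 ejo unfolding path_connected_def by blast
        obtain \<beta> where \<beta>: "path \<beta>" "pathstart \<beta> = ej" "pathfinish \<beta> = e"
          "\<forall>t\<in>{0..1}. dist ej (\<beta> t) = t * dist ej e \<and> dist (\<beta> t) e = (1 - t) * dist ej e"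
          using geo_path[OF geo] by blast
        define P where "P = g +++ (h +++ \<beta>)"
        have hb: "path (h +++ \<beta>)" using h \<beta> by simp
        have "pathstart (h +++ \<beta>) = pathfinish g" using h by (simp add: pathfinish_def)
        then have Pp: "path P" unfolding P_def using g hb by simp
        have P0: "P 0 = g 0" unfolding P_def by (metis pathstart_def pathstart_join)
        have P1: "P 1 = e" unfolding P_def using \<beta>(3) by (metis pathfinish_def pathfinish_join)
        have eki2: "\<forall>g. path g \<and> g 0 \<in> X i \<and> g 1 \<in> X ie \<longrightarrow>
           (\<exists>t\<in>{0..1}. g t \<in> ball ei M)" using eki by blast
        have "path P \<and> P 0 \<in> X i \<and> P 1 \<in> X ie" using Pp P0 P1 g ie(2) by simp
        then have "\<exists>t\<in>{0..1}. P t \<in> ball ei M" using eki2 by blast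
        then have "path_image P \<inter> ball ei M \<noteq> {}" by (simp only: path_meets_iff[symmetric])
        moreover have "path_image P \<subseteq> path_image g \<union> path_image h \<union> path_image \<beta>"
          unfolding P_def using path_image_join_subset[of g "h +++ \<beta>"] path_image_join_subset[of h \<beta>] by blast
        moreover have "path_image g \<inter> ball ei M = {}"
        proof -
          have "\<And>t. t \<in> {0..1} \<Longrightarrow> \<not> g t \<in> ball ei (4 * M)" using avoid by blast
          then show ?thesis using M0 unfolding path_image_def
            by (smt (verit, best) IntE equals0I imageE mem_ball)
        qed
        moreover have "path_image h \<inter> ball ei M = {}" using h(2) M0 by auto
        ultimately have "path_image \<beta> \<inter> ball ei M \<noteq> {}" by blast
        then obtain p where p: "p \<in> path_image \<beta>" "dist ei p < M" by auto
        then obtain s where s: "s \<in> {0..1}" "p = \<beta> s" unfolding path_image_def by auto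
        have d1: "dist ej p = s * dist ej e" "dist p e = (1 - s) * dist ej e"
          using \<beta>(4) s by auto
        have "dist ei e \<le> dist ei p + dist p e" by (rule dist_triangle)
        moreover have "dist ej e \<le> dist ei e" using d unfolding ei_def ej_def .
        ultimately have "dist ej p < M" using d1 p(2) by (simp add: algebra_simps)
        then have "dist ei ej < 2 * M"
          using p(2) dist_triangle[of ei ej p] by (simp add: dist_commute)
        with False show False by simp
      qed
    qed
    then show "\<exists>t\<in>{0..1}. g t \<in> ball (epoint W ie e i) (4 * M)" unfolding ei_def .
  qed
qed

end
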